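(* There exist a countable submetrizable ($T_1$, regular) space $X$ and a continuous surjective map $f\colon X\to S_\omega$ which is compact and sequence-covering but not 1-sequence-covering.
   Context: $\omega$ denotes the set of natural numbers. The sequential fan $S_\omega$ is the set $\{0\}\cup\omega^2$ (where $0$ is a point not in $\omega^2$) with the topology generated by the base consisting of all singletons $\{x\}$ with $x\in\omega^2$ together with all sets $\{0\}\cup\{\langle n,k\rangle : n\in\omega,\ k\ge g(n)\}$ for $g\colon\omega\to\omega$. A space $\langle X,\tau_X\rangle$ is submetrizable if there is a metrizable topology $\sigma\subseteq\tau_X$ on $X$. A map is compact if all its fibers are compact. For a space $Z$ and $z\in Z$, $\mathsf{ConvSeq}(Z,z)$ is the set of non-trivial (not eventually constant) sequences in $Z$ converging to $z$, and $\mathsf{ConvSeq}(Z)=\bigcup_{z}\mathsf{ConvSeq}(Z,z)$. A sequence $q$ in $X$ covers a sequence $p$ in $Y$ (with respect to $f\colon X\to Y$) if $f(q(n))=p(n)$ for all $n$. $f$ is sequence-covering if every $p\in\mathsf{ConvSeq}(Y)$ is covered by some $q\in\mathsf{ConvSeq}(X)$; $f$ is 1-sequence-covering if for every $y\in Y$ there is $x\in f^{-1}(y)$ such that every $p\in\mathsf{ConvSeq}(Y,y)$ is covered by some $q\in\mathsf{ConvSeq}(X,x)$. *)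

theory Defs
  imports "HOL-Analysis.Analysis"
begin

text \<open>The sequential fan. The point 0 is represented by None, the point (n,k) of
  omega^2 by Some (n,k).\<close>

definition Sfan_base :: "(nat \<times> nat) option set set" where
  "Sfan_base = {{Some p} | p. True} \<union>
     {insert None {Some (n, k) | n k. k \<ge> g n} | g :: nat \<Rightarrow> nat. True}"

definition S_omega :: "(nat \<times> nat) option topology" where
  "S_omega = topology_generated_by Sfan_base"

definition submetrizable :: "'a topology \<Rightarrow> bool" where
  "submetrizable X \<longleftrightarrow> (\<exists>\<sigma>. metrizable_space \<sigma> \<and> topspace \<sigma> = topspace X \<and>
       (\<forall>U. openin \<sigma> U \<longrightarrow> openin X U))"

definition compact_map :: "'a topology \<Rightarrow> 'b topology \<Rightarrow> ('a \<Rightarrow> 'b) \<Rightarrow> bool" where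
  "compact_map X Y f \<longleftrightarrow> (\<forall>y \<in> topspace Y. compactin X {x \<in> topspace X. f x = y})"

definition ConvSeq :: "'a topology \<Rightarrow> 'a \<Rightarrow> (nat \<Rightarrow> 'a) set" where
  "ConvSeq Z z = {q. (\<forall>n. q n \<in> topspace Z) \<and> limitin Z q z sequentially \<and>
       \<not> (\<exists>c. eventually (\<lambda>n. q n = c) sequentially)}"

definition covers :: "('a \<Rightarrow> 'b) \<Rightarrow> (nat \<Rightarrow> 'a) \<Rightarrow> (nat \<Rightarrow> 'b) \<Rightarrow> bool" where
  "covers f q p \<longleftrightarrow> (\<forall>n. f (q n) = p n)"

definition sequence_covering :: "'a topology \<Rightarrow> 'b topology \<Rightarrow> ('a \<Rightarrow> 'b) \<Rightarrow> bool" where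
  "sequence_covering X Y f \<longleftrightarrow>
     (\<forall>y p. p \<in> ConvSeq Y y \<longrightarrow> (\<exists>x q. q \<in> ConvSeq X x \<and> covers f q p))"

definition one_sequence_covering :: "'a topology \<Rightarrow> 'b topology \<Rightarrow> ('a \<Rightarrow> 'b) \<Rightarrow> bool" where
  "one_sequence_covering X Y f \<longleftrightarrow>
     (\<forall>y \<in> topspace Y. \<exists>x \<in> topspace X. f x = y \<and>
        (\<forall>p \<in> ConvSeq Y y. \<exists>q \<in> ConvSeq X x. covers f q p))"

end

theory Submission
  imports Defs "HOL-Library.Countable" "HOL-Library.Nat_Bijection"
begin

datatype pt = Ainf | Ap nat | Xp nat nat nat | Zp nat nat

instance pt :: countable by countable_datatype

fun valid :: "pt \<Rightarrow> bool" where
  "valid (Xp n k m) = (n \<le> m \<and> m \<le> k)"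
| "valid _ = True"

definition Tp :: "pt set" where "Tp = {p. valid p}"

definition opn :: "pt set \<Rightarrow> bool" where
 "opn U \<longleftrightarrow> U \<subseteq> Tp \<and>
    (\<forall>m. Ap m \<in> U \<longrightarrow> (\<exists>j. \<forall>n k. n \<le> m \<longrightarrow> m \<le> k \<longrightarrow> j \<le> k \<longrightarrow> Xp n k m \<in> U)) \<and>
    (Ainf \<in> U \<longrightarrow> (\<exists>M. \<forall>m\<ge>M. Ap m \<in> U))"

lemma opn_Int: "opn S \<Longrightarrow> opn T \<Longrightarrow> opn (S \<inter> T)"
  unfolding opn_def
proof (intro conjI allI impI)
  assume S: "S \<subseteq> Tp \<and>
    (\<forall>m. Ap m \<in> S \<longrightarrow> (\<exists>j. \<forall>n k. n \<le> m \<longrightarrow> m \<le> k \<longrightarrow> j \<le> k \<longrightarrow> Xp n k m \<in> S)) \<and>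
    (Ainf \<in> S \<longrightarrow> (\<exists>M. \<forall>m\<ge>M. Ap m \<in> S))"
  assume T: "T \<subseteq> Tp \<and>
    (\<forall>m. Ap m \<in> T \<longrightarrow> (\<exists>j. \<forall>n k. n \<le> m \<longrightarrow> m \<le> k \<longrightarrow> j \<le> k \<longrightarrow> Xp n k m \<in> T)) \<and>
    (Ainf \<in> T \<longrightarrow> (\<exists>M. \<forall>m\<ge>M. Ap m \<in> T))"
  show "S \<inter> T \<subseteq> Tp" using S by blast
  fix m assume m: "Ap m \<in> S \<inter> T"
  obtain j1 where j1: "\<forall>n k. n \<le> m \<longrightarrow> m \<le> k \<longrightarrow> j1 \<le> k \<longrightarrow> Xp n k m \<in> S"
    using S m by blast
  obtain j2 where j2: "\<forall>n k. n \<le> m \<longrightarrow> m \<le> k \<longrightarrow> j2 \<le> k \<longrightarrow> Xp n k m \<in> T"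
    using T m by blast
  show "\<exists>j. \<forall>n k. n \<le> m \<longrightarrow> m \<le> k \<longrightarrow> j \<le> k \<longrightarrow> Xp n k m \<in> S \<inter> T"
    apply (rule exI[of _ "max j1 j2"])
    using j1 j2 by simp
next
  assume S: "S \<subseteq> Tp \<and>
    (\<forall>m. Ap m \<in> S \<longrightarrow> (\<exists>j. \<forall>n k. n \<le> m \<longrightarrow> m \<le> k \<longrightarrow> j \<le> k \<longrightarrow> Xp n k m \<in> S)) \<and>
    (Ainf \<in> S \<longrightarrow> (\<exists>M. \<forall>m\<ge>M. Ap m \<in> S))"
  assume T: "T \<subseteq> Tp \<and>
    (\<forall>m. Ap m \<in> T \<longrightarrow> (\<exists>j. \<forall>n k. n \<le> m \<longrightarrow> m \<le> k \<longrightarrow> j \<le> k \<longrightarrow> Xp n k m \<in> T)) \<and>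
    (Ainf \<in> T \<longrightarrow> (\<exists>M. \<forall>m\<ge>M. Ap m \<in> T))"
  assume a: "Ainf \<in> S \<inter> T"
  obtain M1 where M1: "\<forall>m\<ge>M1. Ap m \<in> S" using S a by blast
  obtain M2 where M2: "\<forall>m\<ge>M2. Ap m \<in> T" using T a by blast
  show "\<exists>M. \<forall>m\<ge>M. Ap m \<in> S \<inter> T"
    apply (rule exI[of _ "max M1 M2"])
    using M1 M2 by simp
qed

lemma opn_Union: "(\<And>S. S \<in> K \<Longrightarrow> opn S) \<Longrightarrow> opn (\<Union>K)"
proof -
  assume K: "\<And>S. S \<in> K \<Longrightarrow> opn S"
  show "opn (\<Union>K)"
  unfolding opn_def
  proof (intro conjI allI impI)
    show "\<Union>K \<subseteq> Tp" using K unfolding opn_def by blast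
  next
    fix m assume "Ap m \<in> \<Union>K"
    then obtain S where S: "S \<in> K" "Ap m \<in> S" by blast
    then have "opn S" using K by blast
    then obtain j where j: "\<forall>n k. n \<le> m \<longrightarrow> m \<le> k \<longrightarrow> j \<le> k \<longrightarrow> Xp n k m \<in> S"
      using S(2) unfolding opn_def by blast
    show "\<exists>j. \<forall>n k. n \<le> m \<longrightarrow> m \<le> k \<longrightarrow> j \<le> k \<longrightarrow> Xp n k m \<in> \<Union>K"
      apply (rule exI[of _ j])
      using j S(1) by blast
  next
    assume "Ainf \<in> \<Union>K"
    then obtain S where S: "S \<in> K" "Ainf \<in> S" by blast
    then have "opn S" using K by blast
    then obtain M where M: "\<forall>m\<ge>M. Ap m \<in> S"
      using S(2) unfolding opn_def by blast
    show "\<exists>M. \<forall>m\<ge>M. Ap m \<in> \<Union>K"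
      apply (rule exI[of _ M])
      using M S(1) by blast
  qed
qed

lemma istop: "istopology opn"
  unfolding istopology_def using opn_Int opn_Union by blast

definition Yt :: "pt topology" where "Yt = topology opn"

lemma openin_Yt: "openin Yt U = opn U"
  unfolding Yt_def using istop by simp

lemma opn_Tp: "opn Tp"
  unfolding opn_def Tp_def by auto

lemma topspace_Yt: "topspace Yt = Tp"
  unfolding topspace_def openin_Yt using opn_Tp by (auto simp: opn_def)

fun Fm :: "pt \<Rightarrow> (nat \<times> nat) option" where
  "Fm Ainf = None" | "Fm (Ap m) = None" | "Fm (Xp n k m) = Some (n,k)" | "Fm (Zp n k) = Some (n,k)"

definition Ug :: "(nat \<Rightarrow> nat) \<Rightarrow> (nat \<times> nat) option set" where
  "Ug g = insert None {Some (n, k) | n k. k \<ge> g n}"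

lemma Sfan_base_iff: "B \<in> Sfan_base \<longleftrightarrow> (\<exists>p. B = {Some p}) \<or> (\<exists>g. B = Ug g)"
  unfolding Sfan_base_def Ug_def by auto

lemma Ug_mem: "x \<in> Ug g \<longleftrightarrow> x = None \<or> (\<exists>n k. x = Some (n,k) \<and> g n \<le> k)"
  unfolding Ug_def by auto

lemma Ug_base: "Ug g \<in> Sfan_base"
  unfolding Sfan_base_iff by blast

lemma Ug_open: "openin S_omega (Ug g)"
  unfolding S_omega_def by (rule topology_generated_by_Basis[OF Ug_base])

lemma single_open: "openin S_omega {Some p}"
  unfolding S_omega_def by (rule topology_generated_by_Basis) (auto simp: Sfan_base_iff)

lemma topspace_S: "topspace S_omega = UNIV"
proof -
  have "None \<in> \<Union>Sfan_base" using Ug_base[of "\<lambda>_. 0"] by (auto simp: Ug_def)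
  moreover have "Some p \<in> \<Union>Sfan_base" for p
    by (rule UnionI[of "{Some p}"]) (auto simp: Sfan_base_iff)
  ultimately have "\<Union>Sfan_base = UNIV"
    by (metis UNIV_eq_I not_Some_eq)
  then show ?thesis unfolding S_omega_def by simp
qed

lemma gen_base: "generate_topology_on Sfan_base U \<Longrightarrow> \<forall>x\<in>U. \<exists>B\<in>Sfan_base. x \<in> B \<and> B \<subseteq> U"
proof (induction rule: generate_topology_on.induct)
  case Empty
  then show ?case by simp
next
  case (Int a b)
  have IHa: "\<forall>x\<in>a. \<exists>B\<in>Sfan_base. x \<in> B \<and> B \<subseteq> a" by (fact Int.IH(1))
  have IHb: "\<forall>x\<in>b. \<exists>B\<in>Sfan_base. x \<in> B \<and> B \<subseteq> b" by (fact Int.IH(2))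
  show ?case
  proof
    fix x assume x: "x \<in> a \<inter> b"
    obtain B1 where B1: "B1 \<in> Sfan_base" "x \<in> B1" "B1 \<subseteq> a" using IHa x by (meson IntD1)
    obtain B2 where B2: "B2 \<in> Sfan_base" "x \<in> B2" "B2 \<subseteq> b" using IHb x by (meson IntD2)
    show "\<exists>B\<in>Sfan_base. x \<in> B \<and> B \<subseteq> a \<inter> b"
    proof (cases "\<exists>p. B1 = {Some p}")
      case True
      then obtain p where p: "B1 = {Some p}" by blast
      then have "x = Some p" using B1(2) by simp
      then have "B1 \<subseteq> a \<inter> b" using B1(3) B2(2,3) p by auto
      then show ?thesis using B1(1,2) by blast
    next
      case F1: False
      show ?thesis
      proof (cases "\<exists>p. B2 = {Some p}")
        case True
        then obtain p where p: "B2 = {Some p}" by blast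
        then have "x = Some p" using B2(2) by simp
        then have "B2 \<subseteq> a \<inter> b" using B2(3) B1(2,3) p by auto
        then show ?thesis using B2(1,2) by blast
      next
        case False
        obtain g1 where g1: "B1 = Ug g1" using F1 B1(1) unfolding Sfan_base_iff by blast
        obtain g2 where g2: "B2 = Ug g2" using False B2(1) unfolding Sfan_base_iff by blast
        have "Ug (\<lambda>n. max (g1 n) (g2 n)) \<subseteq> Ug g1 \<inter> Ug g2"
          by (auto simp: Ug_mem)
        then have 1: "Ug (\<lambda>n. max (g1 n) (g2 n)) \<subseteq> a \<inter> b" using B1(3) B2(3) g1 g2 by blast
        have 2: "x \<in> Ug (\<lambda>n. max (g1 n) (g2 n))"
          using B1(2) B2(2) g1 g2 by (auto simp: Ug_mem)
        show ?thesis using 1 2 Ug_base by blast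
      qed
    qed
  qed
next
  case (UN K)
  show ?case
  proof
    fix x assume "x \<in> \<Union>K"
    then obtain k where k: "k \<in> K" "x \<in> k" by blast
    then obtain B where "B\<in>Sfan_base" "x \<in> B" "B \<subseteq> k" using UN.IH by blast
    then show "\<exists>B\<in>Sfan_base. x \<in> B \<and> B \<subseteq> \<Union>K" using k(1) by blast
  qed
next
  case (Basis s)
  then show ?case by blast
qed

lemma S_open_None:
  assumes "openin S_omega U" "None \<in> U"
  shows "\<exists>g. Ug g \<subseteq> U"
proof -
  have "generate_topology_on Sfan_base U"
    using assms(1) unfolding S_omega_def by (rule openin_topology_generated_by)
  then obtain B where "B \<in> Sfan_base" "None \<in> B" "B \<subseteq> U" using gen_base assms(2) by blast
  then show ?thesis unfolding Sfan_base_iff by (auto simp: Ug_def)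
qed

lemma valid_Tp [simp]: "p \<in> Tp \<longleftrightarrow> valid p"
  by (simp add: Tp_def)

lemma cont_Fm: "continuous_map Yt S_omega Fm"
  unfolding continuous_map_def topspace_Yt openin_Yt topspace_S
proof (intro conjI allI impI)
  show "Fm \<in> Tp \<rightarrow> UNIV" by simp
  fix U assume U: "openin S_omega U"
  show "opn {x \<in> Tp. Fm x \<in> U}"
    unfolding opn_def
  proof (intro conjI allI impI)
    show "{x \<in> Tp. Fm x \<in> U} \<subseteq> Tp" by blast
  next
    fix m assume "Ap m \<in> {x \<in> Tp. Fm x \<in> U}"
    then have "None \<in> U" by simp
    then obtain g where g: "Ug g \<subseteq> U" using S_open_None U by blast
    define j where "j = Max (g ` {..m})"
    have gj: "g n \<le> j" if "n \<le> m" for n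
      unfolding j_def using that by (intro Max_ge) auto
    show "\<exists>j. \<forall>n k. n \<le> m \<longrightarrow> m \<le> k \<longrightarrow> j \<le> k \<longrightarrow> Xp n k m \<in> {x \<in> Tp. Fm x \<in> U}"
    proof (intro exI[of _ j] allI impI)
      fix n k assume "n \<le> m" "m \<le> k" "j \<le> k"
      then have "Some (n,k) \<in> Ug g" using gj[of n] unfolding Ug_mem by auto
      then show "Xp n k m \<in> {x \<in> Tp. Fm x \<in> U}" using g \<open>n \<le> m\<close> \<open>m \<le> k\<close> by auto
    qed
  next
    assume "Ainf \<in> {x \<in> Tp. Fm x \<in> U}"
    then have "None \<in> U" by simp
    then show "\<exists>M. \<forall>m\<ge>M. Ap m \<in> {x \<in> Tp. Fm x \<in> U}" by auto
  qed
qed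

fun kk :: "pt \<Rightarrow> nat" where "kk (Xp n k m) = k" | "kk _ = 0"
fun mm :: "pt \<Rightarrow> nat" where "mm (Ap m) = m" | "mm _ = 0"

lemma opn_minus_single: "opn (Tp - {y})"
  unfolding opn_def
proof (intro conjI allI impI)
  show "Tp - {y} \<subseteq> Tp" by blast
next
  fix m assume "Ap m \<in> Tp - {y}"
  show "\<exists>j. \<forall>n k. n \<le> m \<longrightarrow> m \<le> k \<longrightarrow> j \<le> k \<longrightarrow> Xp n k m \<in> Tp - {y}"
  proof (intro exI[of _ "Suc (kk y)"] allI impI)
    fix n k assume "n \<le> m" "m \<le> k" "Suc (kk y) \<le> k"
    then show "Xp n k m \<in> Tp - {y}" by auto
  qed
next
  assume "Ainf \<in> Tp - {y}"
  show "\<exists>M. \<forall>m\<ge>M. Ap m \<in> Tp - {y}"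
  proof (intro exI[of _ "Suc (mm y)"] allI impI)
    fix m assume "Suc (mm y) \<le> m"
    then show "Ap m \<in> Tp - {y}" by auto
  qed
qed

definition Bm :: "nat \<Rightarrow> nat \<Rightarrow> pt set" where
  "Bm m0 j0 = insert (Ap m0) {Xp n k m0 | n k. n \<le> m0 \<and> m0 \<le> k \<and> j0 \<le> k}"

lemma opn_Bm: "opn (Bm m0 j0)"
  unfolding opn_def Bm_def
proof (intro conjI allI impI)
  show "insert (Ap m0) {Xp n k m0 |n k. n \<le> m0 \<and> m0 \<le> k \<and> j0 \<le> k} \<subseteq> Tp" by auto
next
  fix m assume "Ap m \<in> insert (Ap m0) {Xp n k m0 |n k. n \<le> m0 \<and> m0 \<le> k \<and> j0 \<le> k}"
  then have "m = m0" by auto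
  then show "\<exists>j. \<forall>n k. n \<le> m \<longrightarrow> m \<le> k \<longrightarrow> j \<le> k \<longrightarrow>
     Xp n k m \<in> insert (Ap m0) {Xp n k m0 |n k. n \<le> m0 \<and> m0 \<le> k \<and> j0 \<le> k}"
    by (intro exI[of _ j0]) auto
next
  assume "Ainf \<in> insert (Ap m0) {Xp n k m0 |n k. n \<le> m0 \<and> m0 \<le> k \<and> j0 \<le> k}"
  then show "\<exists>M. \<forall>m\<ge>M. Ap m \<in> insert (Ap m0) {Xp n k m0 |n k. n \<le> m0 \<and> m0 \<le> k \<and> j0 \<le> k}"
    by auto
qed

lemma opn_Bm_compl: "opn (Tp - Bm m0 j0)"
  unfolding opn_def Bm_def
proof (intro conjI allI impI)
  fix m assume "Ap m \<in> Tp - insert (Ap m0) {Xp n k m0 |n k. n \<le> m0 \<and> m0 \<le> k \<and> j0 \<le> k}"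
  then have "m \<noteq> m0" by auto
  then show "\<exists>j. \<forall>n k. n \<le> m \<longrightarrow> m \<le> k \<longrightarrow> j \<le> k \<longrightarrow>
     Xp n k m \<in> Tp - insert (Ap m0) {Xp n k m0 |n k. n \<le> m0 \<and> m0 \<le> k \<and> j0 \<le> k}"
    by (intro exI[of _ 0]) auto
next
  assume "Ainf \<in> Tp - insert (Ap m0) {Xp n k m0 |n k. n \<le> m0 \<and> m0 \<le> k \<and> j0 \<le> k}"
  show "\<exists>M. \<forall>m\<ge>M. Ap m \<in> Tp - insert (Ap m0) {Xp n k m0 |n k. n \<le> m0 \<and> m0 \<le> k \<and> j0 \<le> k}"
    by (intro exI[of _ "Suc m0"]) auto
qed auto

definition Vinf :: "nat \<Rightarrow> (nat \<Rightarrow> nat) \<Rightarrow> pt set" where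
  "Vinf M J = insert Ainf ({Ap m | m. M \<le> m} \<union> {Xp n k m | n k m. M \<le> m \<and> n \<le> m \<and> m \<le> k \<and> J m \<le> k})"

lemma opn_Vinf: "opn (Vinf M J)"
  unfolding opn_def Vinf_def
proof (intro conjI allI impI)
  fix m assume "Ap m \<in> insert Ainf ({Ap m | m. M \<le> m} \<union> {Xp n k m | n k m. M \<le> m \<and> n \<le> m \<and> m \<le> k \<and> J m \<le> k})"
  then have "M \<le> m" by auto
  then show "\<exists>j. \<forall>n k. n \<le> m \<longrightarrow> m \<le> k \<longrightarrow> j \<le> k \<longrightarrow>
     Xp n k m \<in> insert Ainf ({Ap m | m. M \<le> m} \<union> {Xp n k m | n k m. M \<le> m \<and> n \<le> m \<and> m \<le> k \<and> J m \<le> k})"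
    by (intro exI[of _ "J m"]) auto
next
  show "\<exists>M'. \<forall>m\<ge>M'. Ap m \<in> insert Ainf ({Ap m | m. M \<le> m} \<union> {Xp n k m | n k m. M \<le> m \<and> n \<le> m \<and> m \<le> k \<and> J m \<le> k})"
    by (intro exI[of _ M]) auto
qed auto

lemma opn_Vinf_compl: "opn (Tp - Vinf M J)"
  unfolding opn_def Vinf_def
proof (intro conjI allI impI)
  fix m assume "Ap m \<in> Tp - insert Ainf ({Ap m | m. M \<le> m} \<union> {Xp n k m | n k m. M \<le> m \<and> n \<le> m \<and> m \<le> k \<and> J m \<le> k})"
  then have "m < M" by auto
  then show "\<exists>j. \<forall>n k. n \<le> m \<longrightarrow> m \<le> k \<longrightarrow> j \<le> k \<longrightarrow>
     Xp n k m \<in> Tp - insert Ainf ({Ap m | m. M \<le> m} \<union> {Xp n k m | n k m. M \<le> m \<and> n \<le> m \<and> m \<le> k \<and> J m \<le> k})"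
    by (intro exI[of _ 0]) auto
qed auto

lemma opn_single: "\<lbrakk>\<And>m. a \<noteq> Ap m; a \<noteq> Ainf; valid a\<rbrakk> \<Longrightarrow> opn {a}"
  unfolding opn_def by auto

lemma clopen_nbhd:
  assumes W: "opn W" and a: "a \<in> W"
  shows "\<exists>U. opn U \<and> opn (Tp - U) \<and> a \<in> U \<and> U \<subseteq> W"
proof (cases a)
  case Ainf
  then obtain M where M: "\<forall>m\<ge>M. Ap m \<in> W" using W a unfolding opn_def by blast
  have "\<forall>m. \<exists>j. M \<le> m \<longrightarrow> (\<forall>n k. n \<le> m \<longrightarrow> m \<le> k \<longrightarrow> j \<le> k \<longrightarrow> Xp n k m \<in> W)"
    using M W unfolding opn_def by blast
  then obtain J where J: "\<And>m n k. M \<le> m \<Longrightarrow> n \<le> m \<Longrightarrow> m \<le> k \<Longrightarrow> J m \<le> k \<Longrightarrow> Xp n k m \<in> W"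
    by metis
  have "Vinf M J \<subseteq> W" unfolding Vinf_def using J M a Ainf by auto
  moreover have "Ainf \<in> Vinf M J" by (simp add: Vinf_def)
  ultimately show ?thesis using opn_Vinf opn_Vinf_compl Ainf by blast
next
  case (Ap m0)
  then obtain j0 where j0: "\<forall>n k. n \<le> m0 \<longrightarrow> m0 \<le> k \<longrightarrow> j0 \<le> k \<longrightarrow> Xp n k m0 \<in> W"
    using W a unfolding opn_def by blast
  have "Bm m0 j0 \<subseteq> W" unfolding Bm_def using j0 a Ap by auto
  moreover have "Ap m0 \<in> Bm m0 j0" by (simp add: Bm_def)
  ultimately show ?thesis using opn_Bm opn_Bm_compl Ap by blast
next
  case (Xp n k m)
  have "valid a" using W a unfolding opn_def by auto
  then show ?thesis using opn_single[of a] opn_minus_single[of a] a Xp by auto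
next
  case (Zp n k)
  then show ?thesis using opn_single[of a] opn_minus_single[of a] a by auto
qed

lemma t1_Yt: "t1_space Yt"
  unfolding t1_space_def topspace_Yt openin_Yt
proof (intro ballI impI)
  fix x y assume "x \<in> Tp" "y \<in> Tp" "x \<noteq> y"
  then have "x \<in> Tp - {y}" by blast
  then obtain U where "opn U" "x \<in> U" "U \<subseteq> Tp - {y}" using clopen_nbhd opn_minus_single by blast
  then show "\<exists>U. opn U \<and> x \<in> U \<and> y \<notin> U" by blast
qed

lemma regular_Yt: "regular_space Yt"
  unfolding regular_space_def closedin_def topspace_Yt openin_Yt
proof (intro allI impI)
  fix C a assume H: "(C \<subseteq> Tp \<and> opn (Tp - C)) \<and> a \<in> Tp - C"
  then obtain U where U: "opn U" "opn (Tp - U)" "a \<in> U" "U \<subseteq> Tp - C" using clopen_nbhd by blast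
  have "C \<subseteq> Tp - U" using H U(4) by blast
  then show "\<exists>U V. opn U \<and> opn V \<and> a \<in> U \<and> C \<subseteq> V \<and> disjnt U V"
    using U by (intro exI[of _ U] exI[of _ "Tp - U"]) (auto simp: disjnt_def)
qed

lemma lim_Ap: "limitin Yt Ap Ainf sequentially"
  unfolding limitin_def topspace_Yt openin_Yt
proof (intro conjI allI impI)
  show "Ainf \<in> Tp" by simp
  fix U assume "opn U \<and> Ainf \<in> U"
  then obtain M where "\<forall>m\<ge>M. Ap m \<in> U" unfolding opn_def by blast
  then show "\<forall>\<^sub>F x in sequentially. Ap x \<in> U" unfolding eventually_sequentially by blast
qed

lemma compact_Fm: "compact_map Yt S_omega Fm"
  unfolding compact_map_def topspace_S
proof
  fix y :: "(nat \<times> nat) option"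
  show "compactin Yt {x \<in> topspace Yt. Fm x = y}"
  proof (cases y)
    case None
    have "{x \<in> topspace Yt. Fm x = y} = insert Ainf (range Ap)"
      unfolding topspace_Yt None
    proof (intro equalityI subsetI)
      fix x assume "x \<in> {x \<in> Tp. Fm x = None}"
      then show "x \<in> insert Ainf (range Ap)" by (cases x) auto
    qed auto
    moreover have "compactin Yt (insert Ainf (range Ap))"
      by (rule compactin_sequence_with_limit[OF lim_Ap]) (auto simp: topspace_Yt)
    ultimately show ?thesis by simp
  next
    case (Some p)
    obtain n k where p: "p = (n,k)" by fastforce
    have "{x \<in> topspace Yt. Fm x = y} \<subseteq> insert (Zp n k) ((\<lambda>m. Xp n k m) ` {..k})"
      unfolding topspace_Yt Some p
    proof
      fix x assume "x \<in> {x \<in> Tp. Fm x = Some (n, k)}"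
      then show "x \<in> insert (Zp n k) ((\<lambda>m. Xp n k m) ` {..k})" by (cases x) auto
    qed
    then have "finite {x \<in> topspace Yt. Fm x = y}" by (rule finite_subset) simp
    then show ?thesis by (intro finite_imp_compactin) auto
  qed
qed

fun phi :: "pt \<Rightarrow> real \<times> real" where
  "phi Ainf = (0,0)"
| "phi (Ap m) = (1/(real m+1), 0)"
| "phi (Xp n k m) = (1/(real m+1), 1/(real (prod_encode (n,k))+1))"
| "phi (Zp n k) = (-1, 1/(real (prod_encode (n,k))+1))"

lemma inj_phi: "inj phi"
proof (rule injI)
  fix x y assume "phi x = phi y"
  then show "x = y"
    by (cases x; cases y) (auto simp: divide_simps)
qed

definition dd :: "pt \<Rightarrow> pt \<Rightarrow> real" where "dd x y = dist (phi x) (phi y)"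

lemma ms: "Metric_space Tp dd"
proof
  fix x y z
  show "0 \<le> dd x y" by (simp add: dd_def)
  show "dd x y = dd y x" by (simp add: dd_def dist_commute)
  show "dd x y = 0 \<longleftrightarrow> x = y" using inj_phi by (simp add: dd_def inj_eq)
  show "dd x z \<le> dd x y + dd y z" by (simp add: dd_def dist_triangle)
qed

lemma dist_aux1: "dist (a, 0::real) (a, b) = \<bar>b\<bar>" for a b :: real
  by (simp add: dist_Pair_Pair dist_real_def)

lemma dist_aux2: "dist (0::real, 0::real) (a, 0) = \<bar>a\<bar>" for a :: real
  by (simp add: dist_Pair_Pair dist_real_def)

lemma small_inv:
  assumes "(0::real) < r"
  obtains j :: nat where "\<And>k. j \<le> k \<Longrightarrow> 1 / (real k + 1) < r"
proof -
  obtain n :: nat where n: "n > 0" "inverse (real n) < r" using ex_inverse_of_nat_less[OF assms] by blast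
  have "1 / (real k + 1) < r" if "n \<le> k" for k
  proof -
    have "1 / (real k + 1) \<le> 1 / real n" using that n(1) by (intro divide_left_mono) auto
    then show ?thesis using n(2) by (simp add: inverse_eq_divide)
  qed
  then show ?thesis using that by blast
qed

lemma submetr_Yt: "submetrizable Yt"
  unfolding submetrizable_def
proof (intro exI[of _ "Metric_space.mtopology Tp dd"] conjI allI impI)
  show "metrizable_space (Metric_space.mtopology Tp dd)"
    by (rule Metric_space.metrizable_space_mtopology[OF ms])
  show "topspace (Metric_space.mtopology Tp dd) = topspace Yt"
    using Metric_space.topspace_mtopology[OF ms] topspace_Yt by simp
  fix U assume "openin (Metric_space.mtopology Tp dd) U"
  then have U: "U \<subseteq> Tp" and B: "\<And>x. x \<in> U \<Longrightarrow> \<exists>r>0. Metric_space.mball Tp dd x r \<subseteq> U"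
    using Metric_space.openin_mtopology[OF ms] by blast+
  show "openin Yt U"
    unfolding openin_Yt opn_def
  proof (intro conjI allI impI)
    show "U \<subseteq> Tp" by (fact U)
  next
    fix m assume m: "Ap m \<in> U"
    then obtain r where r: "r > 0" "Metric_space.mball Tp dd (Ap m) r \<subseteq> U" using B by blast
    obtain j where j: "\<And>k. j \<le> k \<Longrightarrow> 1 / (real k + 1) < r" using small_inv[OF r(1)] by blast
    show "\<exists>j. \<forall>n k. n \<le> m \<longrightarrow> m \<le> k \<longrightarrow> j \<le> k \<longrightarrow> Xp n k m \<in> U"
    proof (intro exI[of _ j] allI impI)
      fix n k assume nk: "n \<le> m" "m \<le> k" "j \<le> k"
      have "1 / (real (prod_encode (n,k)) + 1) \<le> 1 / (real k + 1)"
        using le_prod_encode_2[of k n] by (intro divide_left_mono) auto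
      then have "dd (Ap m) (Xp n k m) < r" using j[OF nk(3)]
        by (simp add: dd_def dist_aux1)
      then have "Xp n k m \<in> Metric_space.mball Tp dd (Ap m) r"
        using Metric_space.in_mball[OF ms] nk by auto
      then show "Xp n k m \<in> U" using r(2) by blast
    qed
  next
    assume a: "Ainf \<in> U"
    then obtain r where r: "r > 0" "Metric_space.mball Tp dd Ainf r \<subseteq> U" using B by blast
    obtain j where j: "\<And>k. j \<le> k \<Longrightarrow> 1 / (real k + 1) < r" using small_inv[OF r(1)] by blast
    show "\<exists>M. \<forall>m\<ge>M. Ap m \<in> U"
    proof (intro exI[of _ j] allI impI)
      fix m assume "j \<le> m"
      then have "dd Ainf (Ap m) < r" using j[of m] by (simp add: dd_def dist_aux2)
      then have "Ap m \<in> Metric_space.mball Tp dd Ainf r"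
        using Metric_space.in_mball[OF ms] by auto
      then show "Ap m \<in> U" using r(2) by blast
    qed
  qed
qed

lemma cols_bounded:
  assumes lim: "limitin S_omega p None sequentially"
  shows "\<exists>N. \<forall>i n k. p i = Some (n,k) \<longrightarrow> n \<le> N"
proof (rule ccontr)
  assume H: "\<not> ?thesis"
  define C where "C = {n. \<exists>i k. p i = Some (n,k)}"
  have infC: "infinite C"
    unfolding infinite_nat_iff_unbounded C_def
  proof
    fix N
    have "\<not> (\<forall>i n k. p i = Some (n,k) \<longrightarrow> n \<le> N)" using H by blast
    then obtain i n k where "p i = Some (n,k)" "\<not> n \<le> N" by blast
    then have "n > N" "n \<in> {n. \<exists>i k. p i = Some (n, k)}" by auto
    then show "\<exists>n>N. n \<in> {n. \<exists>i k. p i = Some (n, k)}" by blast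
  qed
  define h where "h n = (LEAST i. \<exists>k. p i = Some (n,k))" for n
  have hC: "\<exists>k. p (h n) = Some (n,k)" if nC: "n \<in> C" for n
  proof -
    obtain i k where "p i = Some (n,k)" using nC unfolding C_def by blast
    then have "\<exists>k. p i = Some (n,k)" by blast
    then show ?thesis unfolding h_def by (rule LeastI_ex[where P = "\<lambda>i. \<exists>k. p i = Some (n,k)", OF exI[of _ i]])
  qed
  define g where "g n = Suc (snd (the (p (h n))))" for n
  have "openin S_omega (Ug g)" by (rule Ug_open)
  moreover have "None \<in> Ug g" by (simp add: Ug_mem)
  ultimately have "eventually (\<lambda>i. p i \<in> Ug g) sequentially"
    using lim unfolding limitin_def by blast
  then obtain N where N: "\<And>i. i \<ge> N \<Longrightarrow> p i \<in> Ug g" unfolding eventually_sequentially by blast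
  have "inj_on h C"
  proof (rule inj_onI)
    fix a b assume ab: "a \<in> C" "b \<in> C" "h a = h b"
    obtain ka where ka: "p (h a) = Some (a,ka)" using hC ab(1) by blast
    obtain kb where kb: "p (h b) = Some (b,kb)" using hC ab(2) by blast
    have "Some (a,ka) = Some (b,kb)" using ka kb ab(3) by metis
    then show "a = b" by simp
  qed
  then have "infinite (h ` C)" using infC finite_imageD by metis
  then have "\<not> h ` C \<subseteq> {..<N}" using finite_subset[of "h ` C" "{..<N}"] by auto
  then obtain n where n: "n \<in> C" "\<not> h n < N" by auto
  obtain k where k: "p (h n) = Some (n,k)" using hC[OF n(1)] by blast
  have "p (h n) \<in> Ug g" using N n(2) by simp
  moreover have "g n = Suc k" unfolding g_def using k by simp
  ultimately show False using k unfolding Ug_mem by auto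
qed

lemma not_ev_const:
  assumes "\<not> (\<exists>c. eventually (\<lambda>n. p n = c) sequentially)" "\<And>n. F (q n) = p n"
  shows "\<not> (\<exists>c. eventually (\<lambda>n. q n = c) sequentially)"
proof
  assume "\<exists>c. eventually (\<lambda>n. q n = c) sequentially"
  then obtain c where "eventually (\<lambda>n. q n = c) sequentially" by blast
  then have "eventually (\<lambda>n. p n = F c) sequentially"
  proof (rule eventually_mono)
    fix n assume "q n = c"
    then show "p n = F c" using assms(2)[of n] by simp
  qed
  then show False using assms(1) by blast
qed

lemma seqcov_Yt: "sequence_covering Yt S_omega Fm"
  unfolding sequence_covering_def
proof (intro allI impI)
  fix y p assume p: "p \<in> ConvSeq S_omega y"
  then have lim: "limitin S_omega p y sequentially"
    and nc: "\<not> (\<exists>c. eventually (\<lambda>n. p n = c) sequentially)" unfolding ConvSeq_def by auto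
  have yN: "y = None"
  proof (rule ccontr)
    assume "y \<noteq> None"
    then obtain s where s: "y = Some s" by blast
    have "eventually (\<lambda>n. p n \<in> {Some s}) sequentially"
      using lim single_open[of s] s unfolding limitin_def by blast
    then have "eventually (\<lambda>n. p n = Some s) sequentially" by simp
    then show False using nc by blast
  qed
  obtain N where N: "\<And>i n k. p i = Some (n,k) \<Longrightarrow> n \<le> N" using cols_bounded lim yN by blast
  define q where "q i = (case p i of None \<Rightarrow> Ap N | Some (n,k) \<Rightarrow> if N \<le> k then Xp n k N else Zp n k)" for i
  have cov: "Fm (q i) = p i" for i
    unfolding q_def by (cases "p i") auto
  have qT: "q i \<in> Tp" for i
    unfolding q_def using N[of i] by (cases "p i") auto
  have limq: "limitin Yt q (Ap N) sequentially"
    unfolding limitin_def topspace_Yt openin_Yt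
  proof (intro conjI allI impI)
    show "Ap N \<in> Tp" by simp
    fix U assume U: "opn U \<and> Ap N \<in> U"
    then obtain j where j: "\<And>n k. n \<le> N \<Longrightarrow> N \<le> k \<Longrightarrow> j \<le> k \<Longrightarrow> Xp n k N \<in> U"
      unfolding opn_def by blast
    have "None \<in> Ug (\<lambda>_. max N j)" by (simp add: Ug_mem)
    then have "eventually (\<lambda>i. p i \<in> Ug (\<lambda>_. max N j)) sequentially"
      using lim yN Ug_open[of "\<lambda>_. max N j"] unfolding limitin_def by blast
    then show "eventually (\<lambda>i. q i \<in> U) sequentially"
    proof (rule eventually_mono)
      fix i assume "p i \<in> Ug (\<lambda>_. max N j)"
      then show "q i \<in> U" unfolding Ug_mem q_def using U j N[of i] by auto
    qed
  qed
  have "q \<in> ConvSeq Yt (Ap N)"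
    unfolding ConvSeq_def topspace_Yt using qT limq not_ev_const[OF nc, of Fm q] cov by auto
  moreover have "covers Fm q p" unfolding covers_def using cov by blast
  ultimately show "\<exists>x q. q \<in> ConvSeq Yt x \<and> covers Fm q p" by blast
qed

lemma col_lim: "limitin S_omega (\<lambda>i. Some (c, i)) None sequentially"
  unfolding limitin_def topspace_S
proof (intro conjI allI impI)
  show "None \<in> UNIV" by simp
  fix U assume "openin S_omega U \<and> None \<in> U"
  then obtain g where g: "Ug g \<subseteq> U" using S_open_None by blast
  have "\<forall>i\<ge>g c. Some (c, i) \<in> U" using g by (auto simp: Ug_mem)
  then show "eventually (\<lambda>i. Some (c, i) \<in> U) sequentially" unfolding eventually_sequentially by blast
qed

lemma col_nc: "\<not> (\<exists>x. eventually (\<lambda>n. Some (c, n) = x) sequentially)"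
proof
  assume "\<exists>x. eventually (\<lambda>n. Some (c, n) = x) sequentially"
  then obtain x where ev: "eventually (\<lambda>n. Some (c, n) = x) sequentially" ..
  then obtain N where xN: "\<And>n. n \<ge> N \<Longrightarrow> Some (c, n) = x" by (auto simp: eventually_sequentially)
  have "Some (c, N) = x" by (rule xN) simp
  moreover have "Some (c, Suc N) = x" by (rule xN) simp
  ultimately have "Some (c, N) = Some (c, Suc N)" by simp
  then show False by simp
qed

lemma col_seq: "(\<lambda>i. Some (c, i)) \<in> ConvSeq S_omega None"
  unfolding ConvSeq_def topspace_S using col_lim[of c] col_nc[of c] by simp

lemma not1_Yt: "\<not> one_sequence_covering Yt S_omega Fm"
proof
  assume "one_sequence_covering Yt S_omega Fm"
  then obtain x where x: "x \<in> Tp" "Fm x = None"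
    and H: "\<And>p. p \<in> ConvSeq S_omega None \<Longrightarrow> \<exists>q \<in> ConvSeq Yt x. covers Fm q p"
    unfolding one_sequence_covering_def topspace_S topspace_Yt by blast
  show False
  proof (cases x)
    case (Ap m0)
    obtain q where q: "q \<in> ConvSeq Yt (Ap m0)" "covers Fm q (\<lambda>i. Some (Suc m0, i))"
      using H[OF col_seq[of "Suc m0"]] Ap by blast
    have "Ap m0 \<in> Bm m0 0" by (simp add: Bm_def)
    then have "eventually (\<lambda>i. q i \<in> Bm m0 0) sequentially"
      using q(1) opn_Bm[of m0 0] unfolding ConvSeq_def limitin_def openin_Yt by blast
    then obtain N where "q N \<in> Bm m0 0" unfolding eventually_sequentially by blast
    moreover have "Fm (q N) = Some (Suc m0, N)" using q(2) unfolding covers_def by simp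
    ultimately show False unfolding Bm_def by auto
  next
    case Ainf
    obtain q where q: "q \<in> ConvSeq Yt Ainf" "covers Fm q (\<lambda>i. Some (0, i))"
      using H[OF col_seq[of 0]] Ainf by blast
    have Fq: "Fm (q i) = Some (0, i)" for i using q(2) unfolding covers_def by simp
    have qT: "q i \<in> Tp" for i using q(1) unfolding ConvSeq_def topspace_Yt by simp
    have lim: "\<And>U. opn U \<Longrightarrow> Ainf \<in> U \<Longrightarrow> eventually (\<lambda>i. q i \<in> U) sequentially"
      using q(1) unfolding ConvSeq_def limitin_def openin_Yt by blast
    define L where "L m = {i. \<exists>n k. q i = Xp n k m}" for m
    show False
    proof (cases "\<exists>m. infinite (L m)")
      case True
      then obtain m where m: "infinite (L m)" by blast
      have "Ainf \<in> Vinf (Suc m) (\<lambda>_. 0)" by (simp add: Vinf_def)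
      then have "eventually (\<lambda>i. q i \<in> Vinf (Suc m) (\<lambda>_. 0)) sequentially"
        using lim[OF opn_Vinf] by blast
      then obtain N where N: "\<And>i. i \<ge> N \<Longrightarrow> q i \<in> Vinf (Suc m) (\<lambda>_. 0)"
        unfolding eventually_sequentially by blast
      obtain i where i: "i \<ge> N" "i \<in> L m" using m unfolding infinite_nat_iff_unbounded_le by blast
      then obtain n k where "q i = Xp n k m" unfolding L_def by blast
      then show False using N[OF i(1)] unfolding Vinf_def by auto
    next
      case False
      define W where "W = Tp - range q"
      have "opn W"
        unfolding opn_def
      proof (intro conjI allI impI)
        show "W \<subseteq> Tp" unfolding W_def by blast
      next
        fix m assume "Ap m \<in> W"
        obtain j where j: "L m \<subseteq> {..<j}" using False finite_nat_bounded by blast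
        show "\<exists>j. \<forall>n k. n \<le> m \<longrightarrow> m \<le> k \<longrightarrow> j \<le> k \<longrightarrow> Xp n k m \<in> W"
        proof (intro exI[of _ j] allI impI)
          fix n k assume nk: "n \<le> m" "m \<le> k" "j \<le> k"
          have "Xp n k m \<noteq> q i" for i
          proof
            assume e: "Xp n k m = q i"
            then have "i \<in> L m" unfolding L_def by (metis (mono_tags, lifting) mem_Collect_eq)
            then have "i < j" using j by blast
            moreover have "k = i" using Fq[of i] e[symmetric] by simp
            ultimately show False using nk by simp
          qed
          then show "Xp n k m \<in> W" unfolding W_def using nk by auto
        qed
      next
        assume "Ainf \<in> W"
        have "Ap m \<noteq> q i" for m i using Fq[of i] by (metis Fm.simps(2) option.distinct(1))
        then show "\<exists>M. \<forall>m\<ge>M. Ap m \<in> W" unfolding W_def by auto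
      qed
      moreover have "Ainf \<in> W"
      proof -
        have "Ainf \<noteq> q i" for i using Fq[of i] by (metis Fm.simps(1) option.distinct(1))
        then show ?thesis unfolding W_def by auto
      qed
      ultimately obtain N where "\<And>i. i \<ge> N \<Longrightarrow> q i \<in> W"
        using lim unfolding eventually_sequentially by blast
      then have "q N \<in> W" by simp
      then show False unfolding W_def by blast
    qed
  qed (use x in auto)
qed

definition tr :: "('a \<Rightarrow> nat) \<Rightarrow> 'a topology \<Rightarrow> nat topology" where
  "tr e Y = topology (\<lambda>U. U \<subseteq> e ` topspace Y \<and> openin Y (e -` U))"

lemma istop_tr: "istopology (\<lambda>U. U \<subseteq> e ` topspace Y \<and> openin Y (e -` U))"
  unfolding istopology_def
proof (intro conjI)
  show "\<forall>S T. (S \<subseteq> e ` topspace Y \<and> openin Y (e -` S)) \<longrightarrow> (T \<subseteq> e ` topspace Y \<and> openin Y (e -` T))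
     \<longrightarrow> S \<inter> T \<subseteq> e ` topspace Y \<and> openin Y (e -` (S \<inter> T))"
    by (auto simp: vimage_Int openin_Int)
  show "\<forall>K. (\<forall>U\<in>K. U \<subseteq> e ` topspace Y \<and> openin Y (e -` U)) \<longrightarrow>
     \<Union>K \<subseteq> e ` topspace Y \<and> openin Y (e -` \<Union>K)"
  proof (intro allI impI)
    fix K assume K: "\<forall>U\<in>K. U \<subseteq> e ` topspace Y \<and> openin Y (e -` U)"
    have "e -` \<Union>K = \<Union>((\<lambda>U. e -` U) ` K)" by auto
    moreover have "openin Y (\<Union>((\<lambda>U. e -` U) ` K))" using K by (intro openin_Union) auto
    ultimately show "\<Union>K \<subseteq> e ` topspace Y \<and> openin Y (e -` \<Union>K)" using K by auto
  qed
qed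

lemma openin_tr: "openin (tr e Y) U \<longleftrightarrow> U \<subseteq> e ` topspace Y \<and> openin Y (e -` U)"
  unfolding tr_def topology_inverse'[OF istop_tr] ..

lemma topspace_tr: "inj e \<Longrightarrow> topspace (tr e Y) = e ` topspace Y"
proof -
  assume e: "inj e"
  have "openin (tr e Y) (e ` topspace Y)"
    unfolding openin_tr using e by (simp add: inj_vimage_image_eq)
  then have "e ` topspace Y \<subseteq> topspace (tr e Y)" by (rule openin_subset)
  moreover have "topspace (tr e Y) \<subseteq> e ` topspace Y"
    unfolding topspace_def openin_tr by auto
  ultimately show ?thesis by blast
qed

lemma cont_tr: "inj e \<Longrightarrow> continuous_map Y (tr e Y) e"
  unfolding continuous_map_def
proof (intro conjI allI impI)
  assume e: "inj e"
  show "e \<in> topspace Y \<rightarrow> topspace (tr e Y)" using topspace_tr[OF e] by auto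
  fix U assume "openin (tr e Y) U"
  then have U: "U \<subseteq> e ` topspace Y" "openin Y (e -` U)" unfolding openin_tr by auto
  have "{x \<in> topspace Y. e x \<in> U} = e -` U" using openin_subset[OF U(2)] by auto
  then show "openin Y {x \<in> topspace Y. e x \<in> U}" using U by simp
qed

lemma cont_inv_tr: "inj e \<Longrightarrow> continuous_map (tr e Y) Y (inv e)"
  unfolding continuous_map_def
proof (intro conjI allI impI)
  assume e: "inj e"
  show "inv e \<in> topspace (tr e Y) \<rightarrow> topspace Y" using topspace_tr[OF e] e by auto
  fix U assume U: "openin Y U"
  have "{x \<in> topspace (tr e Y). inv e x \<in> U} = e ` U"
    using topspace_tr[OF e] e openin_subset[OF U] by auto
  moreover have "openin (tr e Y) (e ` U)"
    unfolding openin_tr using e U openin_subset[OF U] by (simp add: inj_vimage_image_eq image_mono)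
  ultimately show "openin (tr e Y) {x \<in> topspace (tr e Y). inv e x \<in> U}" by simp
qed

lemma hom_tr:
  assumes e: "inj e" shows "Y homeomorphic_space (tr e Y)"
  unfolding homeomorphic_space_def homeomorphic_maps_def
proof (intro exI[of _ e] exI[of _ "inv e"] conjI ballI)
  show "continuous_map Y (tr e Y) e" by (rule cont_tr[OF e])
  show "continuous_map (tr e Y) Y (inv e)" by (rule cont_inv_tr[OF e])
  fix x show "inv e (e x) = x" using e by simp
next
  fix y assume "y \<in> topspace (tr e Y)"
  then obtain t where "y = e t" using topspace_tr[OF e] by blast
  then show "e (inv e y) = y" using e by simp
qed

lemma Fm_surj: "Fm ` Tp = UNIV"
proof (intro equalityI subsetI)
  fix y :: "(nat \<times> nat) option"
  show "y \<in> Fm ` Tp"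
  proof (cases y)
    case None
    then show ?thesis by (intro image_eqI[of _ _ Ainf]) auto
  next
    case (Some p)
    then obtain n k where "y = Some (n,k)" by (cases p) auto
    then show ?thesis by (intro image_eqI[of _ _ "Zp n k"]) auto
  qed
qed auto

theorem mainTheorem2:
  shows "\<exists>(X :: nat topology) (f :: nat \<Rightarrow> (nat \<times> nat) option).
     countable (topspace X) \<and> submetrizable X \<and> t1_space X \<and> regular_space X \<and>
     continuous_map X S_omega f \<and> f ` topspace X = topspace S_omega \<and>
     compact_map X S_omega f \<and> sequence_covering X S_omega f \<and>
     \<not> one_sequence_covering X S_omega f"
proof -
  define e :: "pt \<Rightarrow> nat" where "e = to_nat"
  have e: "inj e" unfolding e_def by simp
  define X where "X = tr e Yt"
  define f where "f = Fm \<circ> inv e"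
  have tX: "topspace X = e ` Tp" unfolding X_def topspace_tr[OF e] topspace_Yt ..
  have hom: "Yt homeomorphic_space X" unfolding X_def by (rule hom_tr[OF e])
  have c1: "countable (topspace X)" by (rule countable_subset[OF subset_UNIV]) simp
  have c2: "submetrizable X"
  proof -
    obtain \<sigma> where s: "metrizable_space \<sigma>" "topspace \<sigma> = topspace Yt"
      "\<And>U. openin \<sigma> U \<Longrightarrow> openin Yt U"
      using submetr_Yt unfolding submetrizable_def by blast
    have "metrizable_space (tr e \<sigma>)" using s(1) homeomorphic_metrizable_space[OF hom_tr[OF e]] by blast
    moreover have "topspace (tr e \<sigma>) = topspace X" unfolding X_def topspace_tr[OF e] s(2) ..
    moreover have "openin X U" if "openin (tr e \<sigma>) U" for U
      using that s(2,3) unfolding X_def openin_tr by auto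
    ultimately show ?thesis unfolding submetrizable_def by blast
  qed
  have c3: "t1_space X" using homeomorphic_t1_space[OF hom] t1_Yt by blast
  have c4: "regular_space X" using homeomorphic_regular_space[OF hom] regular_Yt by blast
  have ci: "continuous_map X Yt (inv e)" unfolding X_def by (rule cont_inv_tr[OF e])
  have ce: "continuous_map Yt X e" unfolding X_def by (rule cont_tr[OF e])
  have c5: "continuous_map X S_omega f" unfolding f_def by (rule continuous_map_compose[OF ci cont_Fm])
  have c6: "f ` topspace X = topspace S_omega"
  proof -
    have "f ` topspace X = Fm ` Tp" unfolding tX f_def using e by (auto simp: image_comp)
    then show ?thesis using Fm_surj topspace_S by simp
  qed
  have c7: "compact_map X S_omega f"
    unfolding compact_map_def
  proof
    fix y assume "y \<in> topspace S_omega"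
    then have "compactin Yt {x \<in> topspace Yt. Fm x = y}" using compact_Fm unfolding compact_map_def by blast
    then have "compactin X (e ` {x \<in> topspace Yt. Fm x = y})" by (rule image_compactin[OF _ ce])
    moreover have "e ` {x \<in> topspace Yt. Fm x = y} = {x \<in> topspace X. f x = y}"
      unfolding tX topspace_Yt f_def using e by auto
    ultimately show "compactin X {x \<in> topspace X. f x = y}" by simp
  qed
  have c8: "sequence_covering X S_omega f"
    unfolding sequence_covering_def
  proof (intro allI impI)
    fix y p assume "p \<in> ConvSeq S_omega y"
    then obtain x q where q: "q \<in> ConvSeq Yt x" "covers Fm q p"
      using seqcov_Yt unfolding sequence_covering_def by blast
    have qT: "q n \<in> Tp" for n using q(1) unfolding ConvSeq_def topspace_Yt by blast
    have "limitin Yt q x sequentially" using q(1) unfolding ConvSeq_def by blast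
    then have "limitin X (e \<circ> q) (e x) sequentially" by (rule continuous_map_limit[OF ce])
    moreover have "\<not> (\<exists>c. eventually (\<lambda>n. (e \<circ> q) n = c) sequentially)"
      using q(1) unfolding ConvSeq_def
      by (intro not_ev_const[of q "inv e"]) (use e in auto)
    moreover have "\<forall>n. (e \<circ> q) n \<in> topspace X" using qT tX by auto
    ultimately have "e \<circ> q \<in> ConvSeq X (e x)" unfolding ConvSeq_def by blast
    moreover have "covers f (e \<circ> q) p" using q(2) e unfolding covers_def f_def by auto
    ultimately show "\<exists>x q. q \<in> ConvSeq X x \<and> covers f q p" by blast
  qed
  have c9: "\<not> one_sequence_covering X S_omega f"
  proof
    assume H: "one_sequence_covering X S_omega f"
    have "one_sequence_covering Yt S_omega Fm"
      unfolding one_sequence_covering_def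
    proof
      fix y assume y: "y \<in> topspace S_omega"
      obtain x where x: "x \<in> topspace X" "f x = y"
        and P: "\<And>p. p \<in> ConvSeq S_omega y \<Longrightarrow> \<exists>q\<in>ConvSeq X x. covers f q p"
        using H y unfolding one_sequence_covering_def by blast
      have x': "inv e x \<in> topspace Yt" "Fm (inv e x) = y"
        using x tX e unfolding f_def topspace_Yt by auto
      have "\<forall>p\<in>ConvSeq S_omega y. \<exists>q\<in>ConvSeq Yt (inv e x). covers Fm q p"
      proof
        fix p assume "p \<in> ConvSeq S_omega y"
        then obtain q where q: "q \<in> ConvSeq X x" "covers f q p" using P by blast
        have qT: "q n \<in> e ` Tp" for n using q(1) tX unfolding ConvSeq_def by blast
        have eq: "e (inv e (q n)) = q n" for n
        proof -
          obtain t where "q n = e t" using qT[of n] by blast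
          then show ?thesis using e by simp
        qed
        have "limitin X q x sequentially" using q(1) unfolding ConvSeq_def by blast
        then have "limitin Yt (inv e \<circ> q) (inv e x) sequentially" by (rule continuous_map_limit[OF ci])
        moreover have "\<not> (\<exists>c. eventually (\<lambda>n. (inv e \<circ> q) n = c) sequentially)"
          using q(1) unfolding ConvSeq_def
          by (intro not_ev_const[of q e]) (use eq in auto)
        moreover have "\<forall>n. (inv e \<circ> q) n \<in> topspace Yt"
        proof
          fix n
          obtain t where "t \<in> Tp" "q n = e t" using qT[of n] by blast
          then show "(inv e \<circ> q) n \<in> topspace Yt" using e topspace_Yt by simp
        qed
        ultimately have "inv e \<circ> q \<in> ConvSeq Yt (inv e x)" unfolding ConvSeq_def by blast
        moreover have "covers Fm (inv e \<circ> q) p" using q(2) unfolding covers_def f_def by auto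
        ultimately show "\<exists>q\<in>ConvSeq Yt (inv e x). covers Fm q p" by blast
      qed
      then show "\<exists>x\<in>topspace Yt. Fm x = y \<and> (\<forall>p\<in>ConvSeq S_omega y. \<exists>q\<in>ConvSeq Yt x. covers Fm q p)"
        using x' by blast
    qed
    then show False using not1_Yt by blast
  qed
  show ?thesis using c1 c2 c3 c4 c5 c6 c7 c8 c9 by blast
qed

end
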